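(* Let $\mu=(p,q,r,s)\in\mathbb{C}^4$ and $\phi\in\Phi_\mu$. Suppose $X\in\Omega_1$, $Y\in\Omega_2$, $Z\in\Omega_3$ meet at a vertex $v$, and the arrows assigned by $\phi$ on the edges $X\cap Y$ and $X\cap Z$ both point away from $v$. Then, writing $x=\phi(X),y=\phi(Y),z=\phi(Z)$, at least one of the following holds: $|x|\le 2+\frac{|q|+|r|}{4}$; $|y|<2$; $|z|<2$.
   Context: Let $\Sigma$ be a countably infinite simplicial tree, properly embedded in the plane, all of whose vertices have degree $3$. A complementary region is the closure of a connected component of the complement of $\Sigma$; $\Omega$ is the set of complementary regions, $E(\Sigma)$ the set of edges. Every edge $e$ is the intersection of exactly two regions $X,Y$, and its two endpoints lie on two further regions $Z,W$ respectively; write $e\leftrightarrow(X,Y;Z,W)$. Three regions meet at each vertex. Fix a coloring $\mathcal C:\Omega\cup E(\Sigma)\to\{1,2,3\}$ such that for every $e\leftrightarrow(X,Y;Z,W)$, $\mathcal C(e)=\mathcal C(Z)=\mathcal C(W)$ and $\mathcal C(e),\mathcal C(X),\mathcal C(Y)$ are pairwise distinct; $\Omega_i$, $E_i$ denote regions/edges of color $i$. For $\mu=(p,q,r,s)\in\mathbb{C}^4$, a $\mu$-Markoff map is $\phi:\Omega\to\mathbb{C}$ such that (i) at every vertex with regions $X\in\Omega_1,Y\in\Omega_2,Z\in\Omega_3$, $x^2+y^2+z^2+xyz=px+qy+rz+s$ where $x=\phi(X)$, etc.; (ii) for $e\in E_1$, $e\leftrightarrow(Y,Z;X,X')$: $\phi(X)+\phi(X')=p-\phi(Y)\phi(Z)$;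 for $e\in E_2$, $e\leftrightarrow(X,Z;Y,Y')$: $\phi(Y)+\phi(Y')=q-\phi(X)\phi(Z)$; for $e\in E_3$, $e\leftrightarrow(X,Y;Z,Z')$: $\phi(Z)+\phi(Z')=r-\phi(X)\phi(Y)$. $\Phi_\mu$ is the set of such maps. Arrows: given $\phi$ and an edge $e\leftrightarrow(X,Y;Z,W)$, orient $e$ towards its endpoint lying on $W$ if $|\phi(Z)|>|\phi(W)|$, towards its endpoint lying on $Z$ if $|\phi(Z)|<|\phi(W)|$, and arbitrarily (but fixed) if $|\phi(Z)|=|\phi(W)|$. *)

theory Defs
  imports Complex_Main "HOL-Library.Countable_Set"
begin

text \<open>Combinatorial model of a countably infinite trivalent tree properly embedded
in the plane together with its complementary regions.
Vertices are elements of V, A is the (symmetric) adjacency relation, and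
R v is the set of the three complementary regions meeting at the vertex v.
An edge is a pair of adjacent vertices u, v; the two regions containing the edge
are R u \<inter> R v and the further region on which the endpoint u lies is
endreg R u v.\<close>

definition tree3 :: "'v set \<Rightarrow> ('v \<Rightarrow> 'v \<Rightarrow> bool) \<Rightarrow> bool" where
  "tree3 V A \<longleftrightarrow>
     countable V \<and> infinite V \<and>
     (\<forall>u v. A u v \<longrightarrow> u \<in> V \<and> v \<in> V \<and> u \<noteq> v \<and> A v u) \<and>
     (\<forall>v\<in>V. card {u. A v u} = 3) \<and>
     (\<forall>u\<in>V. \<forall>v\<in>V. (u, v) \<in> {(a, b). A a b}\<^sup>*) \<and>
     (\<forall>u v. A u v \<longrightarrow> (u, v) \<notin> ({(a, b). A a b} - {(u, v), (v, u)})\<^sup>*)"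

definition region_structure ::
  "'v set \<Rightarrow> ('v \<Rightarrow> 'v \<Rightarrow> bool) \<Rightarrow> ('v \<Rightarrow> 'r set) \<Rightarrow> bool" where
  "region_structure V A R \<longleftrightarrow>
     (\<forall>v\<in>V. card (R v) = 3) \<and>
     (\<forall>u v. A u v \<longrightarrow> card (R u \<inter> R v) = 2) \<and>
     (\<forall>v u w. A v u \<and> A v w \<and> u \<noteq> w \<longrightarrow> R u \<inter> R v \<noteq> R w \<inter> R v)"

definition endreg :: "('v \<Rightarrow> 'r set) \<Rightarrow> 'v \<Rightarrow> 'v \<Rightarrow> 'r" where
  "endreg R u v = the_elem (R u - R v)"

text \<open>Admissible colouring of regions (and implicitly of edges: the colour of the
edge {u,v} is the common colour of its two end regions).\<close>
definition admissible_coloring ::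
  "'v set \<Rightarrow> ('v \<Rightarrow> 'v \<Rightarrow> bool) \<Rightarrow> ('v \<Rightarrow> 'r set) \<Rightarrow> ('r \<Rightarrow> nat) \<Rightarrow> bool" where
  "admissible_coloring V A R col \<longleftrightarrow>
     (\<forall>v\<in>V. \<forall>X\<in>R v. col X \<in> {1, 2, 3}) \<and>
     (\<forall>u v. A u v \<longrightarrow>
        col (endreg R u v) = col (endreg R v u) \<and>
        (\<forall>S T. R u \<inter> R v = {S, T} \<and> S \<noteq> T \<longrightarrow>
           col S \<noteq> col T \<and> col S \<noteq> col (endreg R u v) \<and> col T \<noteq> col (endreg R u v)))"

definition edge_coef :: "complex \<Rightarrow> complex \<Rightarrow> complex \<Rightarrow> nat \<Rightarrow> complex" where
  "edge_coef p q r i = (if i = 1 then p else if i = 2 then q else r)"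

definition markoff_map ::
  "'v set \<Rightarrow> ('v \<Rightarrow> 'v \<Rightarrow> bool) \<Rightarrow> ('v \<Rightarrow> 'r set) \<Rightarrow> ('r \<Rightarrow> nat) \<Rightarrow>
   complex \<Rightarrow> complex \<Rightarrow> complex \<Rightarrow> complex \<Rightarrow> ('r \<Rightarrow> complex) \<Rightarrow> bool" where
  "markoff_map V A R col p q r s \<phi> \<longleftrightarrow>
     (\<forall>v\<in>V. \<forall>X Y Z. R v = {X, Y, Z} \<and> col X = 1 \<and> col Y = 2 \<and> col Z = 3 \<longrightarrow>
        (\<phi> X)\<^sup>2 + (\<phi> Y)\<^sup>2 + (\<phi> Z)\<^sup>2 + \<phi> X * \<phi> Y * \<phi> Z
          = p * \<phi> X + q * \<phi> Y + r * \<phi> Z + s) \<and>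
     (\<forall>u v. A u v \<longrightarrow> (\<forall>S T. R u \<inter> R v = {S, T} \<and> S \<noteq> T \<longrightarrow>
        \<phi> (endreg R u v) + \<phi> (endreg R v u)
          = edge_coef p q r (col (endreg R u v)) - \<phi> S * \<phi> T))"

text \<open>An arrow assignment for phi: arr u v means the edge {u,v} is oriented from
u towards v. The edge is oriented towards the endpoint lying on W when
|phi Z| > |phi W| (Z, W the end regions), and arbitrarily (but fixed) on ties.\<close>
definition arrows_for ::
  "('v \<Rightarrow> 'v \<Rightarrow> bool) \<Rightarrow> ('v \<Rightarrow> 'r set) \<Rightarrow> ('r \<Rightarrow> complex) \<Rightarrow> ('v \<Rightarrow> 'v \<Rightarrow> bool) \<Rightarrow> bool" where
  "arrows_for A R \<phi> arr \<longleftrightarrow>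
     (\<forall>u v. A u v \<longrightarrow>
        (arr u v \<longleftrightarrow> \<not> arr v u) \<and>
        (norm (\<phi> (endreg R u v)) > norm (\<phi> (endreg R v u)) \<longrightarrow> arr u v))"

end

theory Submission
  imports Defs
begin

lemma key_real:
  fixes x y z q r a b :: real
  assumes "x * y \<le> r + 2 * z" "x * z \<le> q + 2 * y" "y \<ge> 2" "z \<ge> 2" "q \<ge> 0" "r \<ge> 0" "x \<ge> 0"
  shows "x \<le> 2 + (q + r) / 4"
proof -
  have h: "x * (y + z) \<le> (q + r) + 2 * (y + z)" using assms by (simp add: algebra_simps)
  show ?thesis
  proof (rule ccontr)
    assume "\<not> ?thesis"
    hence "x - 2 > (q + r) / 4" by linarith
    hence "(x - 2) * (y + z) > (q + r) / 4 * (y + z)" using assms by (intro mult_strict_right_mono) auto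
    moreover have "(q + r) / 4 * (y + z) \<ge> (q + r) / 4 * 4" using assms by (intro mult_left_mono) auto
    moreover have "(x - 2) * (y + z) = x * (y + z) - 2 * (y + z)" by (simp add: algebra_simps)
    moreover have "(q + r) / 4 * 4 = q + r" by simp
    ultimately show False using h by linarith
  qed
qed

theorem lemma3p3:
  fixes V :: "'v set" and A :: "'v \<Rightarrow> 'v \<Rightarrow> bool" and R :: "'v \<Rightarrow> 'r set"
    and col :: "'r \<Rightarrow> nat" and p q r s :: complex and \<phi> :: "'r \<Rightarrow> complex"
    and arr :: "'v \<Rightarrow> 'v \<Rightarrow> bool" and v u1 u2 :: 'v and X Y Z :: 'r
  assumes "tree3 V A"
    and "region_structure V A R"
    and "admissible_coloring V A R col"
    and "markoff_map V A R col p q r s \<phi>"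
    and "arrows_for A R \<phi> arr"
    and "v \<in> V" and "R v = {X, Y, Z}"
    and "col X = 1" and "col Y = 2" and "col Z = 3"
    and "A v u1" and "R v \<inter> R u1 = {X, Y}"
    and "A v u2" and "R v \<inter> R u2 = {X, Z}"
    and "arr v u1" and "arr v u2"
  shows "norm (\<phi> X) \<le> 2 + (norm q + norm r) / 4 \<or> norm (\<phi> Y) < 2 \<or> norm (\<phi> Z) < 2"
proof -
  have d: "X \<noteq> Y" "X \<noteq> Z" "Y \<noteq> Z" using assms(8-10) by auto
  have e1: "endreg R v u1 = Z"
  proof -
    have "Z \<notin> R u1" using assms(7,12) d by (metis Int_iff insertCI insertE singletonD)
    hence "R v - R u1 = {Z}" using assms(7,12) by blast
    thus ?thesis by (simp add: endreg_def)
  qed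
  have e2: "endreg R v u2 = Y"
  proof -
    have "Y \<notin> R u2" using assms(7,14) d by (metis Int_iff insertCI insertE singletonD)
    hence "R v - R u2 = {Y}" using assms(7,14) by blast
    thus ?thesis by (simp add: endreg_def)
  qed
  have s1: "A u1 v" "A u2 v" using assms(1,11,13) unfolding tree3_def by blast+
  have a1: "\<not> norm (\<phi> (endreg R u1 v)) > norm (\<phi> Z)"
    using assms(5,15) s1 e1 unfolding arrows_for_def by metis
  have a2: "\<not> norm (\<phi> (endreg R u2 v)) > norm (\<phi> Y)"
    using assms(5,16) s1 e2 unfolding arrows_for_def by metis
  have m1: "\<phi> Z + \<phi> (endreg R u1 v) = r - \<phi> X * \<phi> Y"
  proof -
    have "\<forall>S T. R v \<inter> R u1 = {S, T} \<and> S \<noteq> T \<longrightarrow>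
        \<phi> (endreg R v u1) + \<phi> (endreg R u1 v) = edge_coef p q r (col (endreg R v u1)) - \<phi> S * \<phi> T"
      using assms(4,11) unfolding markoff_map_def by blast
    hence "\<phi> (endreg R v u1) + \<phi> (endreg R u1 v) = edge_coef p q r (col (endreg R v u1)) - \<phi> X * \<phi> Y"
      using assms(12) d by blast
    thus ?thesis using e1 assms(10) by (simp add: edge_coef_def)
  qed
  have m2: "\<phi> Y + \<phi> (endreg R u2 v) = q - \<phi> X * \<phi> Z"
  proof -
    have "\<forall>S T. R v \<inter> R u2 = {S, T} \<and> S \<noteq> T \<longrightarrow>
        \<phi> (endreg R v u2) + \<phi> (endreg R u2 v) = edge_coef p q r (col (endreg R v u2)) - \<phi> S * \<phi> T"
      using assms(4,13) unfolding markoff_map_def by blast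
    hence "\<phi> (endreg R v u2) + \<phi> (endreg R u2 v) = edge_coef p q r (col (endreg R v u2)) - \<phi> X * \<phi> Z"
      using assms(14) d by blast
    thus ?thesis using e2 assms(9) by (simp add: edge_coef_def)
  qed
  define x y z where "x = \<phi> X" and "y = \<phi> Y" and "z = \<phi> Z"
  have b1: "norm (r - x*y - z) \<le> norm z" using a1 m1 unfolding x_def y_def z_def
    by (metis add_diff_cancel_left' not_less)
  have b2: "norm (q - x*z - y) \<le> norm y" using a2 m2 unfolding x_def y_def z_def
    by (metis add_diff_cancel_left' not_less)
  have c1: "norm x * norm y \<le> norm r + 2 * norm z"
  proof -
    have "x*y = r - z - (r - x*y - z)" by simp
    hence "norm (x*y) \<le> norm r + norm z + norm (r - x*y - z)"
      by (metis norm_triangle_ineq4 add_right_mono order_trans)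
    thus ?thesis using b1 by (simp add: norm_mult)
  qed
  have c2: "norm x * norm z \<le> norm q + 2 * norm y"
  proof -
    have "x*z = q - y - (q - x*z - y)" by simp
    hence "norm (x*z) \<le> norm q + norm y + norm (q - x*z - y)"
      by (metis norm_triangle_ineq4 add_right_mono order_trans)
    thus ?thesis using b2 by (simp add: norm_mult)
  qed
  show ?thesis
  proof (cases "norm y < 2 \<or> norm z < 2")
    case True thus ?thesis unfolding y_def z_def by blast
  next
    case False
    hence "norm x \<le> 2 + (norm q + norm r) / 4"
      using key_real[OF c1 c2] by simp
    thus ?thesis unfolding x_def by blast
  qed
qed

end
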